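(* Let $w'\in\mathcal{W}^e_n$ and let $(O',E')\to(O,E)$ be one application of the step $(\omega)$ during the computation of $\Omega(w')$, using the notation $o'_1|\cdots|o'_h$, $e'_1|\cdots|e'_k$, and (in cases (P'), (F')) $e'_1=r_js_j\cdots s_1$ from the definition of $(\omega)$. Let $O=o_1|\cdots|o_m$ be the Lyndon factorization of $O$, with conventions $o_i=o'_i=\infty$ for $i\le0$. Then: (i) All the Lyndon factors of $E$ are even. (ii) The Lyndon factors of $O$ are odd and pairwise distinct, and the Lyndon factorization of $O$ is $o'_1|\cdots|o'_{h-1}|o'_he'_1$ after a step of type (S'), $o'_1|\cdots|o'_{h-1}|r_js_jo'_h$ after a step of type (P'), and $o'_1|\cdots|o'_h|s_j|r_j$ after a step of type (F'). (iii) $E<o_{m-1}$. (iv) If $|o_m|\ge2$ and its standard factorization is $o_m=rs$, then the leftmost Lyndon factor $e_1$ of $E$ satisfies $e_1\le s$. (v) After a step of type (S'), the standard factorization of $o_m$ is $o_m=o'_h\cdot e'_1$. (vi) After a step of type (P'), the standard factorization of $o_m$ is $o_m=(r_js_j)\cdot o'_h$.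
   Context: Fix a finite totally ordered alphabet $A$. Words are finite sequences over $A$; $-$ is the empty word. $<$ is lexicographic order (a proper prefix is smaller than the word); $\infty$ is a formal symbol with $w<\infty$ for all words $w$. A Lyndon word is a nonempty word strictly smaller than each of its proper nonempty suffixes. Every word has a unique Lyndon factorization $w=\ell_1\cdots\ell_m$ into Lyndon words with $\ell_1\ge\dots\ge\ell_m$, written $\ell_1|\cdots|\ell_m$; the $\ell_i$ are its Lyndon factors. Odd/even refer to lengths. For a Lyndon word $\ell$ with $|\ell|\ge2$, its standard factorization is $\ell=rs$ with $s$ the longest proper suffix of $\ell$ that is Lyndon (equivalently the smallest proper nonempty suffix). $\mathcal{W}^e_n$: words of length $n$ whose Lyndon factors are all even except possibly one factor of length one. Iterated standard factorization (ISF) of a Lyndon word $\ell$, $|\ell|\ge2$, with respect to $u$ (a word or $\infty$): the unique factorization $\ell=r_js_js_{j-1}\cdots s_1$, $j\ge1$, such that (a) for every $i\in[j]$, $s_i$ is the smallest proper nonempty suffix of $r_js_j\cdots s_i$; (b) for $i\in[j-1]$, $s_i$ is even and $s_i<u$; (c) $s_j$ is odd or $u\le s_j$. Computation of $\Omega(w')$ for $w'\in\mathcal{W}^e_n$: start with $(O',E')=(-,w')$; if $n$ is odd, remove the unique length-one Lyndon factor from $E'$ (so $E'$ becomes the concatenation of the remaining factors) and set $O'$ equal to that letter. While $E'$ is nonempty, apply step $(\omega)$: let $O'=o'_1|\cdots|o'_h$ and $E'=e'_1|\cdots|e'_k$ (with $o'_h=\infty$ if $O'$ is empty). If $o'_h<e'_1$,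 update to (S') $(O'e'_1,\ e'_2\cdots e'_k)$. Otherwise let $e'_1=r_js_js_{j-1}\cdots s_1$ be the ISF of $e'_1$ with respect to $o'_h$ and update to (P') $(o'_1\cdots o'_{h-1}r_js_jo'_h,\ s_{j-1}\cdots s_1e'_2\cdots e'_k)$ if $o'_h\le s_j$, or to (F') $(O's_jr_j,\ s_{j-1}\cdots s_1e'_2\cdots e'_k)$ if $s_j<o'_h$. When $E'$ is empty, $\Omega(w')=O'$. *)

theory Defs
  imports Main
begin

definition lex_less :: "'a::linorder list \<Rightarrow> 'a list \<Rightarrow> bool" where
  "lex_less x y \<longleftrightarrow> (x, y) \<in> lexord {(a, b). a < b}"

definition lex_le :: "'a::linorder list \<Rightarrow> 'a list \<Rightarrow> bool" where
  "lex_le x y \<longleftrightarrow> x = y \<or> lex_less x y"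

text \<open>A word or infinity: None represents infinity, which is above every word.\<close>

fun ltI :: "'a::linorder list option \<Rightarrow> 'a list option \<Rightarrow> bool" where
  "ltI (Some x) (Some y) = lex_less x y"
| "ltI (Some x) None = True"
| "ltI None _ = False"

definition leI :: "'a::linorder list option \<Rightarrow> 'a list option \<Rightarrow> bool" where
  "leI u v \<longleftrightarrow> u = v \<or> ltI u v"

definition psuffix_ne :: "'a list \<Rightarrow> 'a list \<Rightarrow> bool" where
  "psuffix_ne s x \<longleftrightarrow> s \<noteq> [] \<and> (\<exists>p. p \<noteq> [] \<and> x = p @ s)"

definition lyndon :: "'a::linorder list \<Rightarrow> bool" where
  "lyndon w \<longleftrightarrow> w \<noteq> [] \<and> (\<forall>s. psuffix_ne s w \<longrightarrow> lex_less w s)"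

definition is_lfact :: "'a::linorder list list \<Rightarrow> 'a list \<Rightarrow> bool" where
  "is_lfact fs w \<longleftrightarrow> (\<forall>f\<in>set fs. lyndon f) \<and> concat fs = w
     \<and> sorted_wrt (\<lambda>a b. lex_le b a) fs"

text \<open>The (unique) Lyndon factorization of a word.\<close>
definition lfact :: "'a::linorder list \<Rightarrow> 'a list list" where
  "lfact w = (THE fs. is_lfact fs w)"

definition min_suffix :: "'a::linorder list \<Rightarrow> 'a list \<Rightarrow> bool" where
  "min_suffix x s \<longleftrightarrow> psuffix_ne s x \<and> (\<forall>t. psuffix_ne t x \<longrightarrow> lex_le s t)"

definition std_fact :: "'a::linorder list \<Rightarrow> 'a list \<Rightarrow> 'a list \<Rightarrow> bool" where
  "std_fact l r s \<longleftrightarrow> l = r @ s \<and> psuffix_ne s l \<and> lyndon s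
     \<and> (\<forall>t. psuffix_ne t l \<and> lyndon t \<longrightarrow> length t \<le> length s)"

definition We :: "nat \<Rightarrow> 'a::linorder list set" where
  "We n = {w. length w = n
     \<and> length (filter (\<lambda>f. odd (length f)) (lfact w)) \<le> 1
     \<and> (\<forall>f\<in>set (lfact w). odd (length f) \<longrightarrow> length f = 1)}"

text \<open>isf u l r ss: l = r_j s_j s_(j-1) ... s_1 is the ISF of l w.r.t. u,
  where r = r_j and ss = [s_1, ..., s_j] (so ss!(i-1) = s_i).\<close>
definition isf :: "'a::linorder list option \<Rightarrow> 'a list \<Rightarrow> 'a list \<Rightarrow> 'a list list \<Rightarrow> bool" where
  "isf u l r ss \<longleftrightarrow> ss \<noteq> [] \<and> l = r @ concat (rev ss)
     \<and> (\<forall>i<length ss. min_suffix (r @ concat (rev (drop i ss))) (ss ! i))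
     \<and> (\<forall>i<length ss - 1. even (length (ss ! i)) \<and> ltI (Some (ss ! i)) u)
     \<and> (odd (length (last ss)) \<or> leI u (Some (last ss)))"

fun lastopt :: "'a list list \<Rightarrow> 'a list option" where
  "lastopt [] = None"
| "lastopt xs = Some (last xs)"

definition omega_init :: "'a::linorder list \<Rightarrow> 'a list \<times> 'a list" where
  "omega_init w = (if odd (length w)
     then (hd (filter (\<lambda>f. length f = 1) (lfact w)),
           concat (filter (\<lambda>f. length f \<noteq> 1) (lfact w)))
     else ([], w))"

datatype step_kind = StepS | StepP | StepF

text \<open>omega_step st k r ss st2: step (omega) from state st to st2, of type k;
  in cases (P'), (F'), (r, ss) is the ISF r_j s_j ... s_1 of e'_1
  w.r.t. o'_h (ss = [s_1, ..., s_j]); in case (S') r and ss are [].\<close>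
definition omega_step :: "'a::linorder list \<times> 'a list \<Rightarrow> step_kind \<Rightarrow> 'a list \<Rightarrow> 'a list list
    \<Rightarrow> 'a list \<times> 'a list \<Rightarrow> bool" where
  "omega_step st k r ss st2 \<longleftrightarrow>
     (let Oc = fst st; Ec = snd st; os = lfact Oc; es = lfact Ec; u = lastopt os in
      Ec \<noteq> [] \<and>
      ((k = StepS \<and> ltI u (Some (hd es)) \<and> r = [] \<and> ss = []
          \<and> st2 = (Oc @ hd es, concat (tl es)))
     \<or> (k = StepP \<and> \<not> ltI u (Some (hd es)) \<and> 2 \<le> length (hd es) \<and> isf u (hd es) r ss
          \<and> leI u (Some (last ss))
          \<and> st2 = (concat (butlast os) @ r @ last ss @ last os,
                   concat (rev (butlast ss)) @ concat (tl es)))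
     \<or> (k = StepF \<and> \<not> ltI u (Some (hd es)) \<and> 2 \<le> length (hd es) \<and> isf u (hd es) r ss
          \<and> ltI (Some (last ss)) u
          \<and> st2 = (Oc @ last ss @ r,
                   concat (rev (butlast ss)) @ concat (tl es)))))"

definition omega_reach :: "'a::linorder list \<Rightarrow> 'a list \<times> 'a list \<Rightarrow> bool" where
  "omega_reach w st \<longleftrightarrow>
     (omega_init w, st) \<in> {(x, y). \<exists>k r ss. omega_step x k r ss y}\<^sup>*"

end

theory Submission
  imports Defs "HOL-Library.List_Lexorder"
begin

lemma lex_less_iff: "lex_less x y \<longleftrightarrow> x < y"
  by (simp add: lex_less_def list_less_def)

lemma lex_le_iff: "lex_le x y \<longleftrightarrow> x \<le> y"
  by (auto simp add: lex_le_def lex_less_iff list_le_def)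

lemma prefix_less: "t \<noteq> [] \<Longrightarrow> (x::'a::linorder list) < x @ t"
  unfolding list_less_def by (cases t) (auto intro: lexord_append_rightI)

lemma prefix_le: "(x::'a::linorder list) \<le> x @ t"
  by (cases "t = []") (auto intro: less_imp_le prefix_less)

lemma app_left_less: "(p @ x < p @ y) \<longleftrightarrow> (x::'a::linorder list) < y"
  unfolding list_less_def
  by (rule lexord_same_pref_if_irrefl) (simp add: irrefl_def)

lemma app_left_le: "(p @ x \<le> p @ y) \<longleftrightarrow> (x::'a::linorder list) \<le> y"
  by (auto simp: order_le_less app_left_less)

lemma lt_cases:
  assumes "(x::'a::linorder list) < y"
  shows "(\<exists>t. t \<noteq> [] \<and> y = x @ t) \<or> (\<forall>a b. x @ a < y @ b)"
proof -
  have "(x, y) \<in> lexord {(u, v). u < v}" using assms by (simp add: list_less_def)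
  then obtain a v where h: "y = x @ a # v \<or>
            (\<exists> u a b v w. (a,b) \<in> {(u, v). u < v} \<and> x = u @ (a # v) \<and> y = u @ (b # w))"
    unfolding lexord_def by blast
  show ?thesis
  proof (cases "y = x @ a # v")
    case True then show ?thesis by blast
  next
    case False
    then obtain u c d v w where "c < d" "x = u @ c # v" "y = u @ d # w" using h by blast
    then have "x @ a' < y @ b'" for a' b'
      unfolding list_less_def by (simp add: lexord_append_left_rightI)
    then show ?thesis by blast
  qed
qed

lemma lt_nonprefix:
  assumes "(x::'a::linorder list) < y" "length y \<le> length x"
  shows "x @ a < y @ b"
  using assms unfolding list_less_def by (rule lexord_sufI)

lemma lt_app_right:
  assumes "(x::'a::linorder list) < y" "length y \<le> length x"
  shows "x @ a < y"
  using lt_nonprefix[OF assms, of a "[]"] by simp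

section \<open>Lyndon words\<close>

lemma lyndon_iff:
  "lyndon w \<longleftrightarrow> w \<noteq> [] \<and> (\<forall>p s. p \<noteq> [] \<longrightarrow> s \<noteq> [] \<longrightarrow> w = p @ s \<longrightarrow> w < s)"
  by (auto simp: lyndon_def psuffix_ne_def lex_less_iff)

lemma lyndonD: "lyndon w \<Longrightarrow> p \<noteq> [] \<Longrightarrow> s \<noteq> [] \<Longrightarrow> w = p @ s \<Longrightarrow> w < s"
  by (auto simp: lyndon_iff)

lemma lyndon_ne: "lyndon w \<Longrightarrow> w \<noteq> []"
  by (auto simp: lyndon_iff)

lemma lyndon_single: "lyndon [c]"
proof -
  have "False" if "p \<noteq> []" "s \<noteq> []" "[c] = p @ s" for p s :: "'a list"
    using that by (cases p) auto
  then show ?thesis unfolding lyndon_iff by blast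
qed

lemma lyndon_suffix_le: "lyndon w \<Longrightarrow> s \<noteq> [] \<Longrightarrow> w = p @ s \<Longrightarrow> w \<le> s"
  by (cases "p = []") (auto dest: lyndonD intro: less_imp_le)

lemma suffix_long:
  assumes "p @ t = q @ (s::'a list)" "length s \<le> length t"
  shows "\<exists>z. t = z @ s"
proof -
  from assms(1) obtain us where "p = q @ us \<and> us @ t = s \<or> p @ us = q \<and> t = us @ s"
    using append_eq_append_conv2[of p t q s] by blast
  then show ?thesis
  proof
    assume "p = q @ us \<and> us @ t = s"
    then have "us = []" using assms(2) by auto
    then show ?thesis using \<open>p = q @ us \<and> us @ t = s\<close> by auto
  qed blast
qed

lemma psuffix_len: "psuffix_ne s l \<Longrightarrow> 2 \<le> length l"
proof -
  assume "psuffix_ne s l"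
  then obtain p where "p \<noteq> []" "s \<noteq> []" "l = p @ s" by (auto simp: psuffix_ne_def)
  then have "0 < length p" "0 < length s" "length l = length p + length s" by auto
  then show ?thesis by linarith
qed

lemma min_suffix_iff:
  "min_suffix x s \<longleftrightarrow> psuffix_ne s x \<and> (\<forall>t. psuffix_ne t x \<longrightarrow> s \<le> t)"
  by (simp add: min_suffix_def lex_le_iff)

lemma min_suffix_lyndon:
  assumes "min_suffix x s" shows "lyndon s"
proof -
  have "s < t" if "p \<noteq> []" "t \<noteq> []" "s = p @ t" for p t
  proof -
    from assms obtain q where q: "q \<noteq> []" "x = q @ s" by (auto simp: min_suffix_iff psuffix_ne_def)
    have "psuffix_ne t x" using that q by (auto simp: psuffix_ne_def)
    then have "s \<le> t" using assms by (auto simp: min_suffix_iff)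
    moreover have "s \<noteq> t" using that by auto
    ultimately show ?thesis by simp
  qed
  moreover have "s \<noteq> []" using assms by (auto simp: min_suffix_iff psuffix_ne_def)
  ultimately show ?thesis by (auto simp: lyndon_iff)
qed

lemma min_suffix_unique: "min_suffix x s \<Longrightarrow> min_suffix x s' \<Longrightarrow> s = s'"
  by (auto simp: min_suffix_iff intro: order.antisym)

lemma min_suffix_exists:
  assumes "2 \<le> length x" shows "\<exists>s. min_suffix x s"
proof -
  define S where "S = (\<lambda>i. drop i x) ` {1..<length x}"
  have fin: "finite S" and ne: "S \<noteq> {}" using assms by (auto simp: S_def)
  have S_iff: "t \<in> S \<longleftrightarrow> psuffix_ne t x" for t
  proof
    assume "t \<in> S" then obtain i where "1 \<le> i" "i < length x" "t = drop i x" by (auto simp: S_def)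
    then show "psuffix_ne t x" unfolding psuffix_ne_def
      by (intro conjI exI[of _ "take i x"]) auto
  next
    assume "psuffix_ne t x"
    then obtain p where "p \<noteq> []" "t \<noteq> []" "x = p @ t" by (auto simp: psuffix_ne_def)
    then show "t \<in> S" unfolding S_def
      by (intro image_eqI[of _ _ "length p"]) (auto simp: Suc_le_eq)
  qed
  have "min_suffix x (Min S)"
    unfolding min_suffix_iff using Min_in[OF fin ne] Min_le[OF fin] S_iff by blast
  then show ?thesis by blast
qed

lemma min_suffix_longest:
  assumes "min_suffix x s" "psuffix_ne t x" "lyndon t"
  shows "length t \<le> length s"
proof (rule ccontr)
  assume "\<not> length t \<le> length s"
  from assms(1) obtain q where q: "q \<noteq> []" "x = q @ s" "s \<noteq> []" by (auto simp: min_suffix_iff psuffix_ne_def)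
  from assms(2) obtain p where p: "p \<noteq> []" "x = p @ t" by (auto simp: psuffix_ne_def)
  from \<open>\<not> length t \<le> length s\<close> q p obtain z where "t = z @ s" "z \<noteq> []"
    using suffix_long[of p t q s] by fastforce
  then have "t < s" using assms(3) q by (auto dest: lyndonD)
  moreover have "s \<le> t" using assms(1,2) by (auto simp: min_suffix_iff)
  ultimately show False by simp
qed

lemma std_fact_min_suffix:
  assumes "std_fact l r s" shows "min_suffix l s"
proof -
  have "psuffix_ne s l" "lyndon s" "l = r @ s" using assms by (auto simp: std_fact_def)
  then have "2 \<le> length l" using psuffix_len by blast
  then obtain s0 where s0: "min_suffix l s0" using min_suffix_exists by blast
  have "length s0 \<le> length s" using assms s0 min_suffix_lyndon[OF s0]
    by (auto simp: std_fact_def min_suffix_iff)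
  moreover have "length s \<le> length s0" using min_suffix_longest[OF s0] assms
    by (auto simp: std_fact_def)
  ultimately have "length s = length s0" by simp
  moreover obtain p where "l = p @ s" using assms by (auto simp: std_fact_def)
  moreover obtain q where "l = q @ s0" using s0 by (auto simp: min_suffix_iff psuffix_ne_def)
  ultimately have "p @ s = q @ s0" "length s = length s0" by auto
  then have "s = s0" using append_eq_append_conv[of p q s s0] by blast
  then show ?thesis using s0 by simp
qed

lemma min_suffix_std_fact:
  assumes "min_suffix l s" "l = r @ s" shows "std_fact l r s"
  using assms min_suffix_lyndon[OF assms(1)] min_suffix_longest[OF assms(1)]
  by (auto simp: std_fact_def min_suffix_iff)


lemma le_app: "(v::'a::linorder list) \<le> w \<Longrightarrow> v \<le> w @ z"
proof -
  assume "v \<le> w"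
  then consider "v = w" | "v < w" using order_le_less by blast
  then show ?thesis
  proof cases
    case 1 then show ?thesis by (simp add: prefix_le)
  next
    case 2
    from lt_cases[OF this] show ?thesis
    proof
      assume "\<exists>t. t \<noteq> [] \<and> w = v @ t" then obtain t where "w = v @ t" by blast
      then show ?thesis using prefix_le[of v "t @ z"] by simp
    next
      assume "\<forall>a b. v @ a < w @ b" then have "v @ [] < w @ z" by blast
      then show ?thesis by (metis append_Nil2 less_imp_le)
    qed
  qed
qed

lemma lt_app: "(v::'a::linorder list) < w \<Longrightarrow> v < w @ z"
proof -
  assume "v < w"
  from lt_cases[OF this] show ?thesis
  proof
    assume "\<exists>t. t \<noteq> [] \<and> w = v @ t" then obtain t where "t \<noteq> []" "w = v @ t" by blast
    then show ?thesis using prefix_less[of "t @ z" v] by simp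
  next
    assume "\<forall>a b. v @ a < w @ b" then have "v @ [] < w @ z" by blast
    then show ?thesis by simp
  qed
qed

lemma uv_less_v:
  assumes "u \<noteq> []" "(u::'a::linorder list) < v" "lyndon v"
  shows "u @ v < v"
  using lt_cases[OF assms(2)]
proof
  assume "\<exists>t. t \<noteq> [] \<and> v = u @ t" then obtain t where t: "t \<noteq> []" "v = u @ t" by blast
  then have "v < t" using assms by (auto dest: lyndonD)
  then have "u @ v < u @ t" by (simp add: app_left_less)
  then show ?thesis using t by simp
next
  assume "\<forall>a b. u @ a < v @ b" then have "u @ v < v @ []" by blast
  then show ?thesis by simp
qed

lemma lyndon_concat:
  assumes "lyndon u" "lyndon v" "(u::'a::linorder list) < v"
  shows "lyndon (u @ v)"
proof -
  have un: "u \<noteq> []" and vn: "v \<noteq> []" using assms lyndon_ne by auto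
  have uvv: "u @ v < v" using uv_less_v[OF un assms(3,2)] .
  have "u @ v < s" if "p \<noteq> []" "s \<noteq> []" "u @ v = p @ s" for p s
  proof -
    from that(3) obtain us where "u = p @ us \<and> us @ v = s \<or> u @ us = p \<and> v = us @ s"
      using append_eq_append_conv2[of u v p s] by blast
    then show ?thesis
    proof
      assume h: "u = p @ us \<and> us @ v = s"
      show ?thesis
      proof (cases "us = []")
        case True then show ?thesis using h uvv by simp
      next
        case False
        have "u < us" using lyndonD[OF assms(1) that(1) False] h by blast
        moreover have "length us \<le> length u" using h by simp
        ultimately have "u @ v < us @ v" by (rule lt_nonprefix)
        then show ?thesis using h by simp
      qed
    next
      assume h: "u @ us = p \<and> v = us @ s"
      have "v \<le> s" using lyndon_suffix_le[OF assms(2) that(2)] h by simp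
      then show ?thesis using uvv by simp
    qed
  qed
  then show ?thesis using un by (auto simp: lyndon_iff)
qed

lemma concat_min_suffix:
  assumes "lyndon u" "lyndon v" "(u::'a::linorder list) < v" "\<forall>s. min_suffix u s \<longrightarrow> v \<le> s"
  shows "min_suffix (u @ v) v"
proof -
  have un: "u \<noteq> []" and vn: "v \<noteq> []" using assms lyndon_ne by auto
  have "v \<le> t" if "psuffix_ne t (u @ v)" for t
  proof -
    from that obtain p where p: "p \<noteq> []" "t \<noteq> []" "u @ v = p @ t" by (auto simp: psuffix_ne_def)
    from p(3) obtain us where "u = p @ us \<and> us @ v = t \<or> u @ us = p \<and> v = us @ t"
      using append_eq_append_conv2[of u v p t] by blast
    then show ?thesis
    proof
      assume h: "u = p @ us \<and> us @ v = t"
      show ?thesis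
      proof (cases "us = []")
        case True then show ?thesis using h by simp
      next
        case False
        then have ps: "psuffix_ne us u" using h p by (auto simp: psuffix_ne_def)
        then obtain s0 where s0: "min_suffix u s0" using min_suffix_exists psuffix_len by blast
        then have "v \<le> s0" "s0 \<le> us" using assms(4) ps by (auto simp: min_suffix_iff)
        then have "v \<le> us" by simp
        then show ?thesis using le_app h by blast
      qed
    next
      assume h: "u @ us = p \<and> v = us @ t"
      then show ?thesis using lyndon_suffix_le[OF assms(2) p(2)] by simp
    qed
  qed
  moreover have "psuffix_ne v (u @ v)" using un vn by (auto simp: psuffix_ne_def)
  ultimately show ?thesis by (auto simp: min_suffix_iff)
qed

lemma std_right_le:
  assumes "min_suffix x s'" "x = r @ s'" "min_suffix r s"
  shows "s' \<le> s"
proof (rule ccontr)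
  assume "\<not> s' \<le> s"
  then have lt: "s < s'" by simp
  from assms(3) obtain q where q: "q \<noteq> []" "s \<noteq> []" "r = q @ s" by (auto simp: min_suffix_iff psuffix_ne_def)
  have "psuffix_ne (s @ s') x" using q assms(2) by (auto simp: psuffix_ne_def)
  then have "s' \<le> s @ s'" using assms(1) by (auto simp: min_suffix_iff)
  moreover have "s @ s' < s'" using uv_less_v[OF q(2) lt min_suffix_lyndon[OF assms(1)]] .
  ultimately show False by simp
qed

lemma std_left_lyndon:
  assumes "lyndon x" "min_suffix x s" "x = r @ s"
  shows "lyndon r"
proof -
  have rn: "r \<noteq> []" using assms by (auto simp: min_suffix_iff psuffix_ne_def)
  have sn: "s \<noteq> []" using assms by (auto simp: min_suffix_iff psuffix_ne_def)
  have "r < t" if "p \<noteq> []" "t \<noteq> []" "r = p @ t" for p t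
  proof (rule ccontr)
    assume "\<not> r < t"
    moreover have "t \<noteq> r" using that by auto
    ultimately have tr: "t < r" by simp
    have xts: "x < t @ s" using lyndonD[OF assms(1) that(1), of "t @ s"] that assms(3) sn by simp
    from lt_cases[OF tr] show False
    proof
      assume "\<exists>z. z \<noteq> [] \<and> r = t @ z" then obtain z where z: "z \<noteq> []" "r = t @ z" by blast
      then have "t @ (z @ s) < t @ s" using xts assms(3) by simp
      then have "z @ s < s" by (simp add: app_left_less)
      moreover have "psuffix_ne (z @ s) x" using z that assms(3) sn by (auto simp: psuffix_ne_def)
      then have "s \<le> z @ s" using assms(2) by (auto simp: min_suffix_iff)
      ultimately show False by simp
    next
      assume "\<forall>a b. t @ a < r @ b"
      then have "t @ s < r @ s" by blast
      then show False using xts assms(3) by simp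
    qed
  qed
  then show ?thesis using rn by (auto simp: lyndon_iff)
qed

lemma concat_less_gen:
  assumes "z \<noteq> []" "\<forall>f\<in>set fs. \<forall>t. t \<noteq> [] \<longrightarrow> (\<exists>p. z = p @ t) \<longrightarrow> f < t"
  shows "concat fs < (z::'a::linorder list)"
  using assms
proof (induction fs arbitrary: z)
  case Nil then show ?case by (cases z) auto
next
  case (Cons f fs)
  have fz: "f < z" using Cons.prems by (metis append_Nil list.set_intros(1))
  from lt_cases[OF fz] show ?case
  proof
    assume "\<exists>y. y \<noteq> [] \<and> z = f @ y" then obtain y where y: "y \<noteq> []" "z = f @ y" by blast
    have "concat fs < y"
    proof (rule Cons.IH[OF y(1)])
      show "\<forall>f\<in>set fs. \<forall>t. t \<noteq> [] \<longrightarrow> (\<exists>p. y = p @ t) \<longrightarrow> f < t"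
        using Cons.prems(2) y by (metis append.assoc list.set_intros(2))
    qed
    then show ?thesis using y by (simp add: app_left_less)
  next
    assume "\<forall>a b. f @ a < z @ b" then have "f @ concat fs < z @ []" by blast
    then show ?thesis by simp
  qed
qed

lemma concat_less_lyndon:
  assumes "lyndon z" "\<forall>f\<in>set fs. f < z"
  shows "concat fs < z"
proof (rule concat_less_gen)
  show "z \<noteq> []" using assms lyndon_ne by auto
  show "\<forall>f\<in>set fs. \<forall>t. t \<noteq> [] \<longrightarrow> (\<exists>p. z = p @ t) \<longrightarrow> f < t"
    using assms lyndon_suffix_le less_le_trans by blast
qed

section \<open>Lyndon factorization: existence and uniqueness\<close>

lemma is_lfact_iff:
  "is_lfact fs w \<longleftrightarrow> (\<forall>f\<in>set fs. lyndon f) \<and> concat fs = w \<and> sorted_wrt (\<lambda>a b. b \<le> a) fs"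
  by (simp add: is_lfact_def lex_le_iff)

lemma prefix_decomp:
  assumes "\<forall>f\<in>set fs. f \<noteq> []" "concat fs = p @ z" "p \<noteq> []"
  shows "\<exists>i q y. i < length fs \<and> q \<noteq> [] \<and> fs ! i = q @ y \<and> p = concat (take i fs) @ q"
  using assms
proof (induction fs arbitrary: p)
  case Nil then show ?case by simp
next
  case (Cons f fs)
  from Cons.prems(2) have "f @ concat fs = p @ z" by simp
  then obtain us where "f = p @ us \<and> us @ concat fs = z \<or> f @ us = p \<and> concat fs = us @ z"
    using append_eq_append_conv2[of f "concat fs" p z] by blast
  then show ?case
  proof
    assume h: "f = p @ us \<and> us @ concat fs = z"
    show ?thesis
      by (rule exI[of _ 0], rule exI[of _ p], rule exI[of _ us]) (use h Cons.prems in auto)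
  next
    assume h: "f @ us = p \<and> concat fs = us @ z"
    show ?thesis
    proof (cases "us = []")
      case True
      show ?thesis
        by (rule exI[of _ 0], rule exI[of _ f], rule exI[of _ "[]"]) (use h True Cons.prems in auto)
    next
      case False
      from Cons.IH[of us] Cons.prems h False obtain i q y where
        "i < length fs" "q \<noteq> []" "fs ! i = q @ y" "us = concat (take i fs) @ q" by auto
      then show ?thesis using h
        by (intro exI[of _ "Suc i"] exI[of _ q] exI[of _ y]) auto
    qed
  qed
qed

lemma first_longest:
  assumes "is_lfact (f # fs) w" "lyndon p" "w = p @ z"
  shows "length p \<le> length f"
proof (rule ccontr)
  assume "\<not> length p \<le> length f"
  have lf: "\<forall>g\<in>set (f # fs). lyndon g" "concat (f # fs) = w" "sorted_wrt (\<lambda>a b. b \<le> a) (f # fs)"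
    using assms(1) by (auto simp: is_lfact_iff)
  have fn: "f \<noteq> []" using lf lyndon_ne by auto
  from lf(2) assms(3) have "f @ concat fs = p @ z" by simp
  then obtain us where "f = p @ us \<and> us @ concat fs = z \<or> f @ us = p \<and> concat fs = us @ z"
    using append_eq_append_conv2[of f "concat fs" p z] by blast
  moreover have "\<not> (f = p @ us)" using \<open>\<not> length p \<le> length f\<close> by auto
  ultimately have h: "f @ us = p" "concat fs = us @ z" by auto
  then have usn: "us \<noteq> []" using \<open>\<not> length p \<le> length f\<close> by auto
  have "\<forall>g\<in>set fs. g \<noteq> []" using lf lyndon_ne by auto
  from prefix_decomp[OF this h(2) usn] obtain i q y where
    iq: "i < length fs" "q \<noteq> []" "fs ! i = q @ y" "us = concat (take i fs) @ q" by blast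
  have "p = (f @ concat (take i fs)) @ q" using h iq by simp
  then have "p < q" using lyndonD[OF assms(2) _ iq(2)] fn by auto
  moreover have "q \<le> fs ! i" using iq prefix_le by metis
  moreover have "fs ! i \<le> f" using lf(3) iq(1) by (auto simp: set_conv_nth)
  moreover have "f \<le> p" using h prefix_le by metis
  ultimately show False by simp
qed

lemma is_lfact_tail: "is_lfact (f # fs) w \<Longrightarrow> is_lfact fs (concat fs)"
  by (auto simp: is_lfact_iff)

lemma is_lfact_unique: "is_lfact fs w \<Longrightarrow> is_lfact gs w \<Longrightarrow> fs = gs"
proof (induction fs arbitrary: gs w)
  case Nil
  then have "concat gs = []" "\<forall>g\<in>set gs. lyndon g" by (auto simp: is_lfact_iff)
  then show ?case using lyndon_ne by (cases gs) auto
next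
  case (Cons f fs)
  have "f \<noteq> []" "w = f @ concat fs" using Cons.prems(1) lyndon_ne by (auto simp: is_lfact_iff)
  then have "w \<noteq> []" by simp
  then obtain g gs' where gs: "gs = g # gs'" using Cons.prems by (cases gs) (auto simp: is_lfact_iff)
  have lg: "lyndon g" "lyndon f" using Cons.prems gs by (auto simp: is_lfact_iff)
  have wg: "w = g @ concat gs'" "w = f @ concat fs" using Cons.prems gs by (auto simp: is_lfact_iff)
  have "length g \<le> length f" using first_longest[OF Cons.prems(1) lg(1) wg(1)] .
  moreover have "length f \<le> length g" using first_longest[OF Cons.prems(2)[unfolded gs] lg(2) wg(2)] .
  ultimately have "length f = length g" by simp
  then have fg: "f = g" "concat fs = concat gs'" using wg append_eq_append_conv[of f g "concat fs" "concat gs'"] by auto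
  have "fs = gs'"
    using Cons.IH[OF is_lfact_tail[OF Cons.prems(1)]] is_lfact_tail[OF Cons.prems(2)[unfolded gs]] fg by simp
  then show ?case using fg gs by simp
qed

lemma is_lfact_exists: "\<exists>fs. is_lfact fs w"
proof (induction "length w" arbitrary: w rule: less_induct)
  case less
  show ?case
  proof (cases "w = []")
    case True then show ?thesis by (intro exI[of _ "[]"]) (auto simp: is_lfact_iff)
  next
    case False
    define P where "P = {i. 1 \<le> i \<and> i \<le> length w \<and> lyndon (take i w)}"
    have finP: "finite P" by (auto simp: P_def)
    have "take 1 w = [hd w]" using False by (cases w) auto
    then have "1 \<in> P" using False lyndon_single by (auto simp: P_def Suc_le_eq)
    then have neP: "P \<noteq> {}" by blast
    define m where "m = Max P"
    have mP: "m \<in> P" using Max_in[OF finP neP] by (simp add: m_def)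
    have mmax: "\<And>i. i \<in> P \<Longrightarrow> i \<le> m" using Max_ge[OF finP] by (simp add: m_def)
    define p where "p = take m w"
    define z where "z = drop m w"
    have lp: "lyndon p" using mP by (simp add: P_def p_def)
    have wpz: "w = p @ z" by (simp add: p_def z_def)
    have "length z < length w" using mP by (auto simp: z_def P_def)
    then obtain gs where gs: "is_lfact gs z" using less by blast
    have ple: "\<forall>g\<in>set gs. g \<le> p"
    proof (cases gs)
      case Nil then show ?thesis by simp
    next
      case (Cons g1 rest)
      have lg1: "lyndon g1" and zg: "z = g1 @ concat rest"
        using gs Cons by (auto simp: is_lfact_iff)
      have g1p: "g1 \<le> p"
      proof (rule ccontr)
        assume "\<not> g1 \<le> p"
        then have "p < g1" by simp
        then have ly: "lyndon (p @ g1)" using lyndon_concat[OF lp lg1] by simp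
        have lenp: "length p = m" using mP by (simp add: p_def P_def)
        have "take (m + length g1) w = p @ g1" using wpz zg lenp by simp
        moreover have "m + length g1 \<le> length w" using wpz zg lenp by simp
        ultimately have "m + length g1 \<in> P" using ly mP by (auto simp: P_def)
        then have "m + length g1 \<le> m" by (rule mmax)
        then show False using lyndon_ne[OF lg1] by simp
      qed
      have "\<forall>g\<in>set rest. g \<le> g1" using gs Cons by (auto simp: is_lfact_iff)
      then show ?thesis using g1p Cons by auto
    qed
    have "is_lfact (p # gs) w" using gs ple lp wpz by (auto simp: is_lfact_iff)
    then show ?thesis by blast
  qed
qed

lemma lfact_eq: "is_lfact fs w \<Longrightarrow> lfact w = fs"
  unfolding lfact_def using is_lfact_unique by blast

lemma lfact_is: "is_lfact (lfact w) w"
  using is_lfact_exists[of w] lfact_eq by metis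

section \<open>Iterated standard factorization\<close>

lemma drop_last_conv: "xs \<noteq> [] \<Longrightarrow> drop (length xs - 1) xs = [last xs]"
  by (induction xs rule: rev_induct) auto

lemma isf_facts:
  fixes l r :: "'a::linorder list"
  assumes isf: "isf u l r ss" and ll: "lyndon l" and le: "even (length l)"
  shows "lyndon r" "lyndon (r @ last ss)" "min_suffix (r @ last ss) (last ss)"
    "even (length (r @ last ss))"
    "l = (r @ last ss) @ concat (rev (butlast ss))"
    "sorted ss" "\<forall>s\<in>set ss. lyndon s" "\<forall>s\<in>set ss. l < s"
    "\<forall>s\<in>set (butlast ss). even (length s) \<and> ltI (Some s) u"
    "odd (length (last ss)) \<or> leI u (Some (last ss))"
proof -
  define n where "n = length ss"
  define X where "X i = r @ concat (rev (drop i ss))" for i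
  have ssn: "ss \<noteq> []" and lX: "l = r @ concat (rev ss)"
    and ms: "\<And>i. i < n \<Longrightarrow> min_suffix (X i) (ss ! i)"
    and bl: "\<And>i. i < n - 1 \<Longrightarrow> even (length (ss ! i)) \<and> ltI (Some (ss ! i)) u"
    and lst: "odd (length (last ss)) \<or> leI u (Some (last ss))"
    using isf by (auto simp: isf_def n_def X_def)
  have n1: "1 \<le> n" using ssn by (simp add: n_def Suc_le_eq)
  have XS: "X i = X (Suc i) @ ss ! i" if "i < n" for i
    using that by (simp add: X_def n_def Cons_nth_drop_Suc[symmetric])
  have X0: "X 0 = l" by (simp add: X_def lX)
  have Xn: "X n = r" by (simp add: X_def n_def)
  have Xn1: "X (n - 1) = r @ last ss" using drop_last_conv[OF ssn] by (simp add: X_def n_def)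
  have lyX: "lyndon (X i)" if "i \<le> n" for i
    using that
  proof (induction i)
    case 0 then show ?case using X0 ll by simp
  next
    case (Suc i)
    then have "i < n" by simp
    then show ?case using std_left_lyndon[OF Suc.IH[OF less_imp_le[OF \<open>i < n\<close>]] ms XS] by blast
  qed
  have evX: "even (length (X i))" if "i \<le> n - 1" for i
    using that
  proof (induction i)
    case 0 then show ?case using X0 le by simp
  next
    case (Suc i)
    then have "i < n - 1" "i < n" by auto
    then show ?case using Suc.IH bl XS[of i] by simp
  qed
  show "lyndon r" using lyX[of n] Xn by simp
  show "lyndon (r @ last ss)" using lyX[of "n - 1"] Xn1 by simp
  show "min_suffix (r @ last ss) (last ss)" using ms[of "n - 1"] Xn1 n1 ssn
    by (simp add: last_conv_nth n_def)
  show "even (length (r @ last ss))" using evX[of "n - 1"] Xn1 by simp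
  show "l = (r @ last ss) @ concat (rev (butlast ss))"
    using lX append_butlast_last_id[OF ssn] by (metis append.assoc concat_append concat.simps rev.simps rev_append append_Nil2 rev_singleton_conv)
  have lys: "\<forall>s\<in>set ss. lyndon s"
  proof
    fix s assume "s \<in> set ss"
    then obtain i where "i < n" "s = ss ! i" by (auto simp: n_def in_set_conv_nth)
    then show "lyndon s" using ms min_suffix_lyndon by blast
  qed
  then show "\<forall>s\<in>set ss. lyndon s" .
  have srt: "sorted ss" unfolding sorted_iff_nth_Suc
  proof (intro allI impI)
    fix i assume i: "Suc i < length ss"
    show "ss ! i \<le> ss ! Suc i"
    proof (rule ccontr)
      assume "\<not> ss ! i \<le> ss ! Suc i"
      then have lt: "ss ! Suc i < ss ! i" by simp
      from ms[of "Suc i"] i obtain q where q: "q \<noteq> []" "X (Suc i) = q @ ss ! Suc i" "ss ! Suc i \<noteq> []"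
        by (auto simp: min_suffix_iff psuffix_ne_def n_def)
      have "X i = q @ (ss ! Suc i @ ss ! i)" using XS[of i] q i by (simp add: n_def)
      then have "psuffix_ne (ss ! Suc i @ ss ! i) (X i)" using q by (auto simp: psuffix_ne_def)
      then have "ss ! i \<le> ss ! Suc i @ ss ! i" using ms[of i] i by (auto simp: min_suffix_iff n_def)
      moreover have "ss ! Suc i @ ss ! i < ss ! i"
        using uv_less_v[OF q(3) lt] lys i by (simp add: n_def)
      ultimately show False by simp
    qed
  qed
  then show "sorted ss" .
  have l0: "l < ss ! 0"
  proof -
    from ms[of 0] n1 obtain q where "q \<noteq> []" "l = q @ ss ! 0" "ss ! 0 \<noteq> []"
      using X0 by (auto simp: min_suffix_iff psuffix_ne_def)
    then show ?thesis using lyndonD[OF ll] by blast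
  qed
  show "\<forall>s\<in>set ss. l < s"
  proof
    fix s assume "s \<in> set ss"
    then obtain i where "i < n" "s = ss ! i" by (auto simp: n_def in_set_conv_nth)
    then have "ss ! 0 \<le> s" using sorted_nth_mono[OF srt, of 0 i] by (simp add: n_def)
    then show "l < s" using l0 by simp
  qed
  show "\<forall>s\<in>set (butlast ss). even (length s) \<and> ltI (Some s) u"
  proof
    fix s assume "s \<in> set (butlast ss)"
    then obtain i where "i < n - 1" "s = butlast ss ! i" by (auto simp: n_def in_set_conv_nth)
    then have "s = ss ! i" by (simp add: nth_butlast n_def)
    then show "even (length s) \<and> ltI (Some s) u" using bl \<open>i < n - 1\<close> by simp
  qed
  show "odd (length (last ss)) \<or> leI u (Some (last ss))" using lst .
qed

section \<open>The invariant\<close>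

definition omega_inv :: "'a::linorder list \<Rightarrow> 'a list \<Rightarrow> bool" where
  "omega_inv Oc Ec \<longleftrightarrow>
    (\<forall>e\<in>set (lfact Ec). even (length e)) \<and> (\<forall>f\<in>set (lfact Oc). odd (length f))
    \<and> sorted_wrt (\<lambda>a b. b < a) (lfact Oc)
    \<and> ltI (Some Ec) (if 2 \<le> length (lfact Oc) then Some (lfact Oc ! (length (lfact Oc) - 2)) else None)
    \<and> (\<forall>s. lfact Oc \<noteq> [] \<longrightarrow> min_suffix (last (lfact Oc)) s \<longrightarrow> Ec \<noteq> [] \<longrightarrow> hd (lfact Ec) \<le> s)"

lemma lastopt_eq: "lastopt os = (if os = [] then None else Some (last os))"
  by (cases os) auto

lemma ltI_Some: "ltI (Some x) (Some y) \<longleftrightarrow> x < y"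
  by (simp add: lex_less_iff)

lemma leI_Some: "leI (Some x) (Some y) \<longleftrightarrow> x \<le> y"
  by (auto simp add: leI_def lex_less_iff)

lemma leI_None: "\<not> leI None (Some y)"
  by (simp add: leI_def)

lemma lt_via_prefix:
  assumes "lyndon x" "(a::'a::linorder list) < x" "\<And>y. x = a @ y \<Longrightarrow> y \<noteq> [] \<Longrightarrow> b < y"
  shows "a @ b < x"
  using lt_cases[OF assms(2)]
proof
  assume "\<exists>y. y \<noteq> [] \<and> x = a @ y" then obtain y where "y \<noteq> []" "x = a @ y" by blast
  then show ?thesis using assms(3) app_left_less by metis
next
  assume "\<forall>c d. a @ c < x @ d" then have "a @ b < x @ []" by blast
  then show ?thesis by simp
qed

lemma strict_le_sorted: "sorted_wrt (\<lambda>a b. b < a) xs \<Longrightarrow> sorted_wrt (\<lambda>a b. b \<le> a) (xs::'a::linorder list)"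
  by (rule sorted_wrt_mono_rel) auto

lemma strict_distinct: "sorted_wrt (\<lambda>a b. b < a) xs \<Longrightarrow> distinct (xs::'a::linorder list)"
  by (induction xs) auto

lemma new_O_last:
  fixes c :: "'a::linorder list"
  assumes "sorted_wrt (\<lambda>a b. b < a) os" "os \<noteq> []" "\<forall>x\<in>set (butlast os). c < x"
  shows "sorted_wrt (\<lambda>a b. b < a) (butlast os @ [c])"
proof -
  have "sorted_wrt (\<lambda>a b. b < a) (butlast os @ [last os])" using assms(1,2) by simp
  then have "sorted_wrt (\<lambda>a b. b < a) (butlast os)" by (simp add: sorted_wrt_append)
  then show ?thesis using assms(3) by (simp add: sorted_wrt_append)
qed

lemma butlast_facts:
  fixes os :: "'a::linorder list list"
  assumes "sorted_wrt (\<lambda>a b. b < a) os" "x \<in> set (butlast os)"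
  shows "last os < x" "2 \<le> length os" "os ! (length os - 2) \<le> x"
proof -
  from assms(2) obtain i where i: "i < length os - 1" "x = os ! i"
    by (auto simp: in_set_conv_nth nth_butlast)
  have os: "os \<noteq> []" using assms(2) by auto
  have sw: "\<And>i j. i < j \<Longrightarrow> j < length os \<Longrightarrow> os ! j < os ! i"
    using assms(1) by (auto simp: sorted_wrt_iff_nth_less)
  show "last os < x" using sw[of i "length os - 1"] i os by (simp add: last_conv_nth)
  show "2 \<le> length os" using i by simp
  show "os ! (length os - 2) \<le> x"
  proof (cases "i = length os - 2")
    case True then show ?thesis using i by simp
  next
    case False
    then have "i < length os - 2" "length os - 2 < length os" using i by linarith+
    then show ?thesis using sw[of i "length os - 2"] i by simp
  qed
qed

lemma odd_last_nth_butlast: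
  "2 \<le> length os \<Longrightarrow> (butlast os @ [c]) ! (length os - 2) = os ! (length os - 2)"
proof -
  assume "2 \<le> length os"
  then have "length os - 2 < length (butlast os)" by simp
  then show ?thesis by (simp add: nth_append nth_butlast)
qed

lemma step_lemma:
  fixes Oc' Ec' Oc Ec r :: "'a::linorder list"
  assumes inv: "omega_inv Oc' Ec'" and st: "omega_step (Oc', Ec') k r ss (Oc, Ec)"
  shows "omega_inv Oc Ec
    \<and> (k = StepS \<longrightarrow> lfact Oc = butlast (lfact Oc') @ [last (lfact Oc') @ hd (lfact Ec')]
          \<and> min_suffix (last (lfact Oc)) (hd (lfact Ec')))
    \<and> (k = StepP \<longrightarrow> lfact Oc = butlast (lfact Oc') @ [r @ last ss @ last (lfact Oc')]
          \<and> min_suffix (last (lfact Oc)) (last (lfact Oc')))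
    \<and> (k = StepF \<longrightarrow> lfact Oc = lfact Oc' @ [last ss, r])"
proof -
  define os where "os = lfact Oc'"
  define es where "es = lfact Ec'"
  define u where "u = lastopt os"
  have S: "Ec' \<noteq> [] \<and>
      ((k = StepS \<and> ltI u (Some (hd es)) \<and> r = [] \<and> ss = []
          \<and> Oc = Oc' @ hd es \<and> Ec = concat (tl es))
     \<or> (k = StepP \<and> \<not> ltI u (Some (hd es)) \<and> 2 \<le> length (hd es) \<and> isf u (hd es) r ss
          \<and> leI u (Some (last ss))
          \<and> Oc = concat (butlast os) @ r @ last ss @ last os
          \<and> Ec = concat (rev (butlast ss)) @ concat (tl es))
     \<or> (k = StepF \<and> \<not> ltI u (Some (hd es)) \<and> 2 \<le> length (hd es) \<and> isf u (hd es) r ss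
          \<and> ltI (Some (last ss)) u
          \<and> Oc = Oc' @ last ss @ r
          \<and> Ec = concat (rev (butlast ss)) @ concat (tl es)))"
    using st unfolding omega_step_def Let_def os_def es_def u_def by simp
  have fos: "is_lfact os Oc'" and fes: "is_lfact es Ec'" by (simp_all add: os_def es_def lfact_is)
  have Ec'ne: "Ec' \<noteq> []" using S by blast
  have I1: "\<forall>e\<in>set es. even (length e)" and I2a: "\<forall>f\<in>set os. odd (length f)"
    and I2b: "sorted_wrt (\<lambda>a b. b < a) os"
    and I3: "2 \<le> length os \<Longrightarrow> Ec' < os ! (length os - 2)"
    and I4: "\<And>s. os \<noteq> [] \<Longrightarrow> min_suffix (last os) s \<Longrightarrow> hd es \<le> s"
    using inv Ec'ne unfolding omega_inv_def os_def[symmetric] es_def[symmetric]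
    by (auto simp: ltI_Some lex_less_iff split: if_splits)
  have esne: "es \<noteq> []" using fes Ec'ne by (auto simp: is_lfact_iff)
  define e1 where "e1 = hd es"
  define et where "et = tl es"
  have es_eq: "es = e1 # et" using esne by (simp add: e1_def et_def)
  have Ec'eq: "Ec' = e1 @ concat et" using fes es_eq by (simp add: is_lfact_iff)
  have le1: "lyndon e1" and ev1: "even (length e1)" using fes I1 es_eq by (auto simp: is_lfact_iff)
  have etle: "\<forall>e\<in>set et. e \<le> e1" and etev: "\<forall>e\<in>set et. even (length e)"
    and etly: "\<forall>e\<in>set et. lyndon e" and etsort: "sorted_wrt (\<lambda>a b. b \<le> a) et"
    using fes I1 es_eq by (auto simp: is_lfact_iff)
  have fet: "is_lfact et (concat et)" using etly etsort by (simp add: is_lfact_iff)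
  have e1Ec: "e1 \<le> Ec'" using Ec'eq prefix_le by metis
  have los: "\<forall>f\<in>set os. lyndon f" and Oc'eq: "Oc' = concat os" using fos by (auto simp: is_lfact_iff)
  have bigx: "Ec' < x \<and> last os < x \<and> lyndon x" if "x \<in> set (butlast os)" for x
  proof -
    have "last os < x" "2 \<le> length os" "os ! (length os - 2) \<le> x"
      using butlast_facts[OF I2b that] by auto
    moreover have "lyndon x" using los in_set_butlastD[OF that] by simp
    ultimately show ?thesis using I3 by (meson less_le_trans)
  qed
  show ?thesis
  proof (cases k)
    case StepS
    then have h: "ltI u (Some e1)" "Oc = Oc' @ e1" "Ec = concat et" "r = []" "ss = []"
      using S by (auto simp: e1_def et_def)
    have osne: "os \<noteq> []" using h(1) by (auto simp: u_def lastopt_eq)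
    define o1 where "o1 = last os"
    have oe: "o1 < e1" using h(1) osne by (simp add: u_def lastopt_eq ltI_Some lex_less_iff o1_def)
    have lo: "lyndon o1" and oo: "odd (length o1)" using los I2a osne by (auto simp: o1_def)
    define c where "c = o1 @ e1"
    have lc: "lyndon c" using lyndon_concat[OF lo le1 oe] by (simp add: c_def)
    have oc: "odd (length c)" using oo ev1 by (simp add: c_def)
    have msc: "min_suffix c e1"
      unfolding c_def by (rule concat_min_suffix[OF lo le1 oe]) (use I4 osne in \<open>auto simp: o1_def e1_def\<close>)
    have cx: "c < x" if "x \<in> set (butlast os)" for x
    proof -
      have x: "Ec' < x" "o1 < x" "lyndon x" using bigx[OF that] by (auto simp: o1_def)
      show ?thesis unfolding c_def
      proof (rule lt_via_prefix[OF x(3) x(2)])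
        fix y assume "x = o1 @ y" "y \<noteq> []"
        then have "x < y" using lyndonD[OF x(3)] lyndon_ne[OF lo] by blast
        then show "e1 < y" using e1Ec x(1) by simp
      qed
    qed
    define NO where "NO = butlast os @ [c]"
    have NOs: "sorted_wrt (\<lambda>a b. b < a) NO" unfolding NO_def using new_O_last[OF I2b osne] cx by blast
    have NOcat: "concat NO = Oc"
      using h(2) Oc'eq osne append_butlast_last_id[OF osne] unfolding NO_def c_def o1_def
      by (metis append.assoc concat.simps(1) concat.simps(2) concat_append append_Nil2)
    have NOly: "\<forall>f\<in>set NO. lyndon f" using los lc by (auto simp: NO_def dest: in_set_butlastD)
    have NOodd: "\<forall>f\<in>set NO. odd (length f)" using I2a oc by (auto simp: NO_def dest: in_set_butlastD)
    have lO: "lfact Oc = NO" using NOs NOcat NOly strict_le_sorted by (intro lfact_eq) (auto simp: is_lfact_iff)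
    have lE: "lfact Ec = et" using fet h(3) by (simp add: lfact_eq)
    have lenNO: "length NO = length os" using osne by (simp add: NO_def)
    have I3n: "Ec < NO ! (length NO - 2)" if "2 \<le> length NO"
    proof -
      have "2 \<le> length os" using that lenNO by simp
      then have z: "NO ! (length NO - 2) = os ! (length os - 2)"
        using lenNO odd_last_nth_butlast by (simp add: NO_def)
      have "os ! (length os - 2) \<in> set os" using \<open>2 \<le> length os\<close> by simp
      then have lz: "lyndon (os ! (length os - 2))" using los by blast
      have "\<forall>f\<in>set et. f < os ! (length os - 2)"
        using etle e1Ec I3[OF \<open>2 \<le> length os\<close>] by (meson le_less_trans)
      then show ?thesis using concat_less_lyndon[OF lz] h(3) z by simp
    qed
    have I4n: "hd et \<le> s" if "min_suffix c s" "concat et \<noteq> []" for s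
    proof -
      have "s = e1" using min_suffix_unique[OF that(1) msc] .
      moreover have "et \<noteq> []" using that(2) by auto
      ultimately show ?thesis using etle by simp
    qed
    have "omega_inv Oc Ec"
      unfolding omega_inv_def lO lE
      using etev NOodd NOs I3n I4n h(3)
      by (auto simp: ltI_Some lex_less_iff NO_def)
    then show ?thesis using StepS lO
      by (simp add: NO_def c_def o1_def os_def es_def e1_def msc[unfolded c_def o1_def os_def es_def e1_def])
  next
    case StepP
    then have h: "\<not> ltI u (Some e1)" "isf u e1 r ss" "leI u (Some (last ss))"
      "Oc = concat (butlast os) @ r @ last ss @ last os"
      "Ec = concat (rev (butlast ss)) @ concat et"
      using S by (auto simp: e1_def et_def)
    have osne: "os \<noteq> []" using h(3) by (auto simp: u_def lastopt_eq leI_None)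
    define o1 where "o1 = last os"
    have uo: "u = Some o1" using osne by (simp add: u_def lastopt_eq o1_def)
    have e1o: "e1 \<le> o1" using h(1) uo by (simp add: ltI_Some lex_less_iff)
    have osl: "o1 \<le> last ss" using h(3) uo by (simp add: leI_Some)
    have lo: "lyndon o1" and oo: "odd (length o1)" using los I2a osne by (auto simp: o1_def)
    note IF = isf_facts[OF h(2) le1 ev1]
    define x where "x = r @ last ss"
    have lx: "lyndon x" and msx: "min_suffix x (last ss)" and evx: "even (length x)"
      using IF by (simp_all add: x_def)
    have xe1: "x \<le> e1" using IF(5) prefix_le unfolding x_def by metis
    have xo: "x < o1"
    proof -
      have "x \<le> o1" using xe1 e1o by simp
      moreover have "x \<noteq> o1" using evx oo by auto
      ultimately show ?thesis by simp
    qed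
    define c where "c = x @ o1"
    have lc: "lyndon c" using lyndon_concat[OF lx lo xo] by (simp add: c_def)
    have oc: "odd (length c)" using oo evx by (simp add: c_def)
    have msc: "min_suffix c o1"
      unfolding c_def
    proof (rule concat_min_suffix[OF lx lo xo], intro allI impI)
      fix s assume "min_suffix x s"
      then have "s = last ss" using min_suffix_unique msx by blast
      then show "o1 \<le> s" using osl by simp
    qed
    have cx: "c < y" if "y \<in> set (butlast os)" for y
    proof -
      have y: "Ec' < y" "o1 < y" "lyndon y" using bigx[OF that] by (auto simp: o1_def)
      have "x < y" using xe1 e1Ec y(1) by simp
      then show ?thesis unfolding c_def
      proof (rule lt_via_prefix[OF y(3)])
        fix w assume "y = x @ w" "w \<noteq> []"
        then have "y < w" using lyndonD[OF y(3)] lyndon_ne[OF lx] by blast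
        then show "o1 < w" using y(2) by simp
      qed
    qed
    define NO where "NO = butlast os @ [c]"
    have NOs: "sorted_wrt (\<lambda>a b. b < a) NO" unfolding NO_def using new_O_last[OF I2b osne] cx by blast
    have NOcat: "concat NO = Oc"
      using h(4) unfolding NO_def c_def x_def o1_def by simp
    have NOly: "\<forall>f\<in>set NO. lyndon f" using los lc by (auto simp: NO_def dest: in_set_butlastD)
    have NOodd: "\<forall>f\<in>set NO. odd (length f)" using I2a oc by (auto simp: NO_def dest: in_set_butlastD)
    have lO: "lfact Oc = NO" using NOs NOcat NOly strict_le_sorted by (intro lfact_eq) (auto simp: is_lfact_iff)
    define L where "L = rev (butlast ss) @ et"
    have ssly: "\<forall>s\<in>set ss. lyndon s" and sss: "sorted ss" and e1s: "\<forall>s\<in>set ss. e1 < s"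
      and blss: "\<forall>s\<in>set (butlast ss). even (length s) \<and> ltI (Some s) u"
      using IF by auto
    have ssne: "ss \<noteq> []" using h(2) by (simp add: isf_def)
    have sbl: "sorted (butlast ss)" using sss sorted_butlast ssne by blast
    have Lly: "\<forall>f\<in>set L. lyndon f" using ssly etly by (auto simp: L_def dest: in_set_butlastD)
    have Lsort: "sorted_wrt (\<lambda>a b. b \<le> a) L"
    proof -
      have "sorted_wrt (\<lambda>a b. b \<le> a) (rev (butlast ss))" using sbl by (simp add: sorted_wrt_rev)
      moreover have "\<forall>s\<in>set (butlast ss). \<forall>e\<in>set et. e \<le> s"
      proof (intro ballI)
        fix s e assume "s \<in> set (butlast ss)" "e \<in> set et"
        then have "e1 < s" "e \<le> e1" using e1s etle in_set_butlastD[of s ss] by auto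
        then show "e \<le> s" by simp
      qed
      ultimately show ?thesis using etsort by (simp add: L_def sorted_wrt_append)
    qed
    have Lcat: "concat L = Ec" using h(5) by (simp add: L_def)
    have lE: "lfact Ec = L" using Lly Lsort Lcat by (intro lfact_eq) (simp add: is_lfact_iff)
    have Lev: "\<forall>f\<in>set L. even (length f)" using blss etev by (auto simp: L_def)
    have Lo: "\<forall>f\<in>set L. f \<le> o1"
    proof
      fix f assume "f \<in> set L"
      then consider "f \<in> set (butlast ss)" | "f \<in> set et" by (auto simp: L_def)
      then show "f \<le> o1"
      proof cases
        case 1 then show ?thesis using blss uo by (auto simp: ltI_Some lex_less_iff)
      next
        case 2 then show ?thesis using etle e1o by (meson order_trans)
      qed
    qed
    have lenNO: "length NO = length os" using osne by (simp add: NO_def)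
    have I3n: "Ec < NO ! (length NO - 2)" if "2 \<le> length NO"
    proof -
      have "2 \<le> length os" using that lenNO by simp
      then have z: "NO ! (length NO - 2) = os ! (length os - 2)"
        using lenNO odd_last_nth_butlast by (simp add: NO_def)
      have zin: "os ! (length os - 2) \<in> set (butlast os)" using \<open>2 \<le> length os\<close>
        by (simp add: in_set_conv_nth nth_butlast) (metis diff_less_mono2 diff_Suc_less
            length_butlast lessI nth_butlast One_nat_def Suc_1 less_le_trans zero_less_two)
      have "\<forall>f\<in>set L. f < os ! (length os - 2)"
        using Lo bigx[OF zin] by (auto simp: o1_def intro: le_less_trans)
      then show ?thesis using concat_less_lyndon[of "os ! (length os - 2)" L] bigx[OF zin] Lcat z by simp
    qed
    have I4n: "hd L \<le> s" if "min_suffix c s" "concat L \<noteq> []" for s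
    proof -
      have "s = o1" using min_suffix_unique[OF that(1) msc] .
      moreover have "L \<noteq> []" using that(2) by auto
      ultimately show ?thesis using Lo by simp
    qed
    have "omega_inv Oc Ec"
      unfolding omega_inv_def lO lE
      using Lev NOodd NOs I3n I4n Lcat
      by (auto simp: ltI_Some lex_less_iff NO_def)
    then show ?thesis using StepP lO
      by (simp add: NO_def c_def o1_def x_def os_def msc[unfolded c_def o1_def x_def os_def append.assoc])
  next
    case StepF
    then have h: "\<not> ltI u (Some e1)" "isf u e1 r ss" "ltI (Some (last ss)) u"
      "Oc = Oc' @ last ss @ r"
      "Ec = concat (rev (butlast ss)) @ concat et"
      using S by (auto simp: e1_def et_def)
    note IF = isf_facts[OF h(2) le1 ev1]
    define sj where "sj = last ss"
    have ssne: "ss \<noteq> []" using h(2) by (simp add: isf_def)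
    have sjin: "sj \<in> set ss" using ssne by (simp add: sj_def)
    have ssly: "\<forall>s\<in>set ss. lyndon s" and sss: "sorted ss" and e1s: "\<forall>s\<in>set ss. e1 < s"
      and blss: "\<forall>s\<in>set (butlast ss). even (length s) \<and> ltI (Some s) u"
      using IF by auto
    have lsj: "lyndon sj" using ssly sjin by blast
    have sjodd: "odd (length sj)"
    proof -
      have "\<not> leI u (Some sj)"
        using h(3) by (cases u) (auto simp: leI_def sj_def lex_less_iff)
      then show ?thesis using IF(10) by (simp add: sj_def)
    qed
    have lr: "lyndon r" and msx: "min_suffix (r @ sj) sj" and evx: "even (length (r @ sj))"
      and lx: "lyndon (r @ sj)"
      using IF by (simp_all add: sj_def)
    have rodd: "odd (length r)" using evx sjodd by simp
    have rsj: "r < sj"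
    proof -
      have "r < r @ sj" using prefix_less lyndon_ne[OF lsj] by blast
      moreover have "r @ sj < sj" using lyndonD[OF lx lyndon_ne[OF lr] lyndon_ne[OF lsj]] by simp
      ultimately show ?thesis by simp
    qed
    have sjy: "sj < y" if "y \<in> set os" for y
    proof -
      have osne: "os \<noteq> []" using that by auto
      have "sj < last os" using h(3) osne by (simp add: u_def lastopt_eq sj_def lex_less_iff)
      moreover have "last os \<le> y"
      proof (cases "y \<in> set (butlast os)")
        case True then show ?thesis using butlast_facts[OF I2b True] by simp
      next
        case False
        then have "y = last os" using that append_butlast_last_id[OF osne]
          by (metis Un_iff empty_iff empty_set list.set(2) set_append insert_iff)
        then show ?thesis by simp
      qed
      ultimately show ?thesis by simp
    qed
    define NO where "NO = os @ [sj, r]"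
    have NOs: "sorted_wrt (\<lambda>a b. b < a) NO"
      using I2b sjy rsj by (auto simp: NO_def sorted_wrt_append intro: less_trans)
    have NOcat: "concat NO = Oc" using h(4) Oc'eq by (simp add: NO_def sj_def)
    have NOly: "\<forall>f\<in>set NO. lyndon f" using los lsj lr by (auto simp: NO_def)
    have NOodd: "\<forall>f\<in>set NO. odd (length f)" using I2a sjodd rodd by (auto simp: NO_def)
    have lO: "lfact Oc = NO" using NOs NOcat NOly strict_le_sorted by (intro lfact_eq) (auto simp: is_lfact_iff)
    define L where "L = rev (butlast ss) @ et"
    have sbl: "sorted (butlast ss)" using sss sorted_butlast ssne by blast
    have Lly: "\<forall>f\<in>set L. lyndon f" using ssly etly by (auto simp: L_def dest: in_set_butlastD)
    have Lsort: "sorted_wrt (\<lambda>a b. b \<le> a) L"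
    proof -
      have "sorted_wrt (\<lambda>a b. b \<le> a) (rev (butlast ss))" using sbl by (simp add: sorted_wrt_rev)
      moreover have "\<forall>s\<in>set (butlast ss). \<forall>e\<in>set et. e \<le> s"
      proof (intro ballI)
        fix s e assume "s \<in> set (butlast ss)" "e \<in> set et"
        then have "e1 < s" "e \<le> e1" using e1s etle in_set_butlastD[of s ss] by auto
        then show "e \<le> s" by simp
      qed
      ultimately show ?thesis using etsort by (simp add: L_def sorted_wrt_append)
    qed
    have Lcat: "concat L = Ec" using h(5) by (simp add: L_def)
    have lE: "lfact Ec = L" using Lly Lsort Lcat by (intro lfact_eq) (simp add: is_lfact_iff)
    have Lev: "\<forall>f\<in>set L. even (length f)" using blss etev by (auto simp: L_def)
    have Ls: "\<forall>f\<in>set L. f < sj"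
    proof
      fix f assume "f \<in> set L"
      then consider "f \<in> set (butlast ss)" | "f \<in> set et" by (auto simp: L_def)
      then show "f < sj"
      proof cases
        case 1
        then obtain i where i: "i < length ss - 1" "f = ss ! i"
          by (auto simp: in_set_conv_nth nth_butlast)
        have "f \<le> sj" using sorted_nth_mono[OF sss, of i "length ss - 1"] i ssne
          by (simp add: sj_def last_conv_nth)
        moreover have "even (length f)" using blss 1 by blast
        then have "f \<noteq> sj" using sjodd by auto
        ultimately show ?thesis by simp
      next
        case 2 then show ?thesis using etle e1s sjin by (meson le_less_trans)
      qed
    qed
    have I3n: "Ec < sj" using concat_less_lyndon[OF lsj Ls] Lcat by simp
    have I4n: "hd L \<le> s" if "min_suffix r s" "concat L \<noteq> []" for s
    proof -
      have "sj \<le> s" using std_right_le[OF msx refl that(1)] .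
      moreover have "L \<noteq> []" using that(2) by auto
      ultimately show ?thesis using Ls by (meson less_imp_le order_trans list.set_sel(1))
    qed
    have "omega_inv Oc Ec"
      unfolding omega_inv_def lO lE
      using Lev NOodd NOs I3n I4n Lcat
      by (auto simp: ltI_Some lex_less_iff NO_def nth_append)
    then show ?thesis using StepF lO
      by (simp add: NO_def sj_def os_def)
  qed
qed

lemma parity_concat:
  "even (length (concat fs)) \<longleftrightarrow> even (length (filter (\<lambda>f. odd (length f)) fs))"
  by (induction fs) auto

lemma init_inv:
  fixes w :: "'a::linorder list"
  assumes "w \<in> We n"
  shows "omega_inv (fst (omega_init w)) (snd (omega_init w))"
proof -
  define fs where "fs = lfact w"
  have ffs: "is_lfact fs w" by (simp add: fs_def lfact_is)
  have lw: "length w = n" and c1: "length (filter (\<lambda>f. odd (length f)) fs) \<le> 1"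
    and c2: "\<forall>f\<in>set fs. odd (length f) \<longrightarrow> length f = 1"
    using assms by (auto simp: We_def fs_def)
  have wcat: "concat fs = w" and fly: "\<forall>f\<in>set fs. lyndon f" and fsort: "sorted_wrt (\<lambda>a b. b \<le> a) fs"
    using ffs by (auto simp: is_lfact_iff)
  show ?thesis
  proof (cases "odd (length w)")
    case True
    have "filter (\<lambda>f. length f = 1) fs \<noteq> []"
    proof
      assume "filter (\<lambda>f. length f = 1) fs = []"
      then have "\<forall>f\<in>set fs. length f \<noteq> 1" by (simp add: filter_empty_conv)
      then have "filter (\<lambda>f. odd (length f)) fs = []" using c2 by (auto simp: filter_empty_conv)
      then have "even (length w)" using parity_concat[of fs] wcat by simp
      then show False using True by simp
    qed
    then have "hd (filter (\<lambda>f. length f = 1) fs) \<in> set (filter (\<lambda>f. length f = 1) fs)"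
      by (rule list.set_sel(1))
    then obtain a where a: "a = hd (filter (\<lambda>f. length f = 1) fs)" "a \<in> set fs" "length a = 1"
      by simp
    from a(3) obtain ch where ach: "a = [ch]" by (auto simp: length_Suc_conv)
    have lO: "lfact a = [a]" by (rule lfact_eq) (simp add: is_lfact_iff ach lyndon_single)
    define G where "G = filter (\<lambda>f. length f \<noteq> 1) fs"
    have lE: "lfact (concat G) = G"
      by (rule lfact_eq) (use fly fsort in \<open>auto simp: is_lfact_iff G_def sorted_wrt_filter\<close>)
    have Gev: "\<forall>e\<in>set G. even (length e)" using c2 by (auto simp: G_def)
    have init: "omega_init w = (a, concat G)" using True a(1) by (simp add: omega_init_def fs_def G_def)
    have "\<not> min_suffix a s" for s
    proof
      assume "min_suffix a s"
      then have "psuffix_ne s a" by (simp add: min_suffix_def)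
      then have "2 \<le> length a" by (rule psuffix_len)
      then show False using ach by simp
    qed
    then show ?thesis unfolding init omega_inv_def using lO lE Gev ach by simp
  next
    case False
    have init: "omega_init w = ([], w)" using False by (simp add: omega_init_def)
    have lO: "lfact [] = ([] :: 'a list list)" by (rule lfact_eq) (simp add: is_lfact_iff)
    have ev: "\<forall>e\<in>set fs. even (length e)"
    proof (rule ccontr)
      assume "\<not> (\<forall>e\<in>set fs. even (length e))"
      then have "filter (\<lambda>f. odd (length f)) fs \<noteq> []" by (auto simp: filter_empty_conv)
      then have "length (filter (\<lambda>f. odd (length f)) fs) = 1" using c1 by (cases "filter (\<lambda>f. odd (length f)) fs") auto
      then have "odd (length w)" using parity_concat[of fs] wcat by simp
      then show False using False by simp
    qed
    then show ?thesis unfolding init omega_inv_def using lO by (simp add: fs_def)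
  qed
qed

lemma reach_inv:
  fixes w :: "'a::linorder list"
  assumes "w \<in> We n" "omega_reach w st"
  shows "omega_inv (fst st) (snd st)"
proof -
  have "(omega_init w, st) \<in> {(x, y). \<exists>k r ss. omega_step x k r ss y}\<^sup>*"
    using assms(2) by (simp add: omega_reach_def)
  then show ?thesis
  proof (induction rule: rtrancl_induct)
    case base then show ?case using init_inv[OF assms(1)] .
  next
    case (step y z)
    then obtain k r ss where "omega_step y k r ss z" by blast
    then have "omega_step (fst y, snd y) k r ss (fst z, snd z)" by simp
    from conjunct1[OF step_lemma[OF step.IH this]] show ?case .
  qed
qed

theorem lemma4p23:
  fixes w' Oc' Ec' Oc Ec r :: "'a::{linorder,finite} list" and ss :: "'a list list"
    and n :: nat and k :: step_kind
  assumes "w' \<in> We n"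
    and "omega_reach w' (Oc', Ec')"
    and "omega_step (Oc', Ec') k r ss (Oc, Ec)"
  shows "(\<forall>e\<in>set (lfact Ec). even (length e))
    \<and> (\<forall>f\<in>set (lfact Oc). odd (length f)) \<and> distinct (lfact Oc)
    \<and> (k = StepS \<longrightarrow> lfact Oc = butlast (lfact Oc') @ [last (lfact Oc') @ hd (lfact Ec')])
    \<and> (k = StepP \<longrightarrow> lfact Oc = butlast (lfact Oc') @ [r @ last ss @ last (lfact Oc')])
    \<and> (k = StepF \<longrightarrow> lfact Oc = lfact Oc' @ [last ss, r])
    \<and> ltI (Some Ec) (if 2 \<le> length (lfact Oc) then Some (lfact Oc ! (length (lfact Oc) - 2)) else None)
    \<and> (\<forall>x y. lfact Oc \<noteq> [] \<longrightarrow> 2 \<le> length (last (lfact Oc)) \<longrightarrow> std_fact (last (lfact Oc)) x y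
          \<longrightarrow> Ec \<noteq> [] \<longrightarrow> lex_le (hd (lfact Ec)) y)
    \<and> (k = StepS \<longrightarrow> std_fact (last (lfact Oc)) (last (lfact Oc')) (hd (lfact Ec')))
    \<and> (k = StepP \<longrightarrow> std_fact (last (lfact Oc)) (r @ last ss) (last (lfact Oc')))"
proof -
  have inv0: "omega_inv Oc' Ec'" using reach_inv[OF assms(1,2)] by simp
  note SL = step_lemma[OF inv0 assms(3)]
  have inv: "omega_inv Oc Ec" using conjunct1[OF SL] .
  note SL2 = conjunct2[OF SL]
  note SLS = conjunct1[OF SL2]
  note SLP = conjunct1[OF conjunct2[OF SL2]]
  note SLF = conjunct2[OF conjunct2[OF SL2]]
  have A: "\<forall>e\<in>set (lfact Ec). even (length e)" "\<forall>f\<in>set (lfact Oc). odd (length f)"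
    "sorted_wrt (\<lambda>a b. b < a) (lfact Oc)"
    "ltI (Some Ec) (if 2 \<le> length (lfact Oc) then Some (lfact Oc ! (length (lfact Oc) - 2)) else None)"
    "\<And>s. lfact Oc \<noteq> [] \<Longrightarrow> min_suffix (last (lfact Oc)) s \<Longrightarrow> Ec \<noteq> [] \<Longrightarrow> hd (lfact Ec) \<le> s"
    using inv unfolding omega_inv_def by auto
  have D: "distinct (lfact Oc)" using strict_distinct[OF A(3)] .
  have IV: "\<forall>x y. lfact Oc \<noteq> [] \<longrightarrow> 2 \<le> length (last (lfact Oc)) \<longrightarrow> std_fact (last (lfact Oc)) x y
          \<longrightarrow> Ec \<noteq> [] \<longrightarrow> lex_le (hd (lfact Ec)) y"
    using A(5) std_fact_min_suffix by (auto simp: lex_le_iff)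
  have V: "k = StepS \<longrightarrow> std_fact (last (lfact Oc)) (last (lfact Oc')) (hd (lfact Ec'))"
  proof
    assume "k = StepS"
    have h: "lfact Oc = butlast (lfact Oc') @ [last (lfact Oc') @ hd (lfact Ec')]
      \<and> min_suffix (last (lfact Oc)) (hd (lfact Ec'))" using SLS \<open>k = StepS\<close> by (rule mp)
    show "std_fact (last (lfact Oc)) (last (lfact Oc')) (hd (lfact Ec'))"
      by (rule min_suffix_std_fact[OF conjunct2[OF h]]) (simp add: conjunct1[OF h])
  qed
  have VI: "k = StepP \<longrightarrow> std_fact (last (lfact Oc)) (r @ last ss) (last (lfact Oc'))"
  proof
    assume "k = StepP"
    have h: "lfact Oc = butlast (lfact Oc') @ [r @ last ss @ last (lfact Oc')]
      \<and> min_suffix (last (lfact Oc)) (last (lfact Oc'))" using SLP \<open>k = StepP\<close> by (rule mp)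
    show "std_fact (last (lfact Oc)) (r @ last ss) (last (lfact Oc'))"
      by (rule min_suffix_std_fact[OF conjunct2[OF h]]) (simp add: conjunct1[OF h])
  qed
  have S1: "k = StepS \<longrightarrow> lfact Oc = butlast (lfact Oc') @ [last (lfact Oc') @ hd (lfact Ec')]"
    using SLS by simp
  have P1: "k = StepP \<longrightarrow> lfact Oc = butlast (lfact Oc') @ [r @ last ss @ last (lfact Oc')]"
    using SLP by simp
  show ?thesis using A(1) A(2) D S1 P1 SLF A(4) IV V VI by (intro conjI)
qed

end
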